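(* Let $I,J$ be countable sets with nested finite subsets $I_1\subset I_2\subset\cdots$, $\bigcup_nI_n=I$, and $J_1\subset J_2\subset\cdots$, $\bigcup_nJ_n=J$, and let $a:I\to J$ be a bijection with $$\lim_{n\to\infty}\frac{|a(I_n)\cap J_n|}{|I_n|}=\lim_{n\to\infty}\frac{|J_n|}{|I_n|}=1.$$ Then for every bounded operator $T\in B(\ell^2(J))$ and every $p\in\mathbb{N}^*$, $$p\text{-}\lim_n\frac{1}{|J_n|}\sum_{j\in J_n}T_{j,j}=p\text{-}\lim_n\frac{1}{|I_n|}\sum_{i\in I_n}T_{a(i),a(i)},$$ i.e. $\mu(T)=\mu(a_*(T))$.
   Context: $\{\epsilon_j\}_{j\in J}$ and $\{\delta_i\}_{i\in I}$ are the canonical orthonormal bases of $\ell^2(J)$ and $\ell^2(I)$; $T_{j,k}=\langle T\epsilon_j,\epsilon_k\rangle$. $a_*(T)\in B(\ell^2(I))$ is defined by $\langle a_*(T)\delta_{i_1},\delta_{i_2}\rangle=\langle T\epsilon_{a(i_1)},\epsilon_{a(i_2)}\rangle$. $\mathbb{N}^*$ is the set of free ultrafilters on $\mathbb{N}$, and for a bounded complex sequence $\mathbf{x}$, $p\text{-}\lim\mathbf{x}=c$ iff for every $\varepsilon>0$ the set $\{n:|x_n-c|<\varepsilon\}$ belongs to $p$. For an operator $T$ on $\ell^2(J)$ (resp. $\ell^2(I)$) the ultrafilter measure $\mu(T)(p)$ is $p\text{-}\lim_n\frac1{|J_n|}\sum_{j\in J_n}T_{j,j}$ (resp. with $I_n$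 and the basis $\delta_i$). *)

theory Defs
  imports "HOL-Analysis.Analysis"
begin

text \<open>An operator on l2(J) is represented by its matrix
  T j k = <T e_j, e_k> (j, k in J). The matrix defines a bounded operator
  on l2(J) iff there is a constant C with norm (T x) <= C * norm x for all
  finitely supported x in l2(J), where (T x)_k = sum_j T j k * x j.
  The norm of T x is expressed as the supremum of its finite partial sums.\<close>
definition bounded_op_matrix :: "'j set \<Rightarrow> ('j \<Rightarrow> 'j \<Rightarrow> complex) \<Rightarrow> bool" where
  "bounded_op_matrix J T \<longleftrightarrow>
     (\<exists>C::real. \<forall>x::'j \<Rightarrow> complex. \<forall>S K.
        finite S \<and> S \<subseteq> J \<and> finite K \<and> K \<subseteq> J \<and> (\<forall>j. j \<notin> S \<longrightarrow> x j = 0) \<longrightarrow>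
        (\<Sum>k\<in>K. (cmod (\<Sum>j\<in>S. T j k * x j))\<^sup>2) \<le> C\<^sup>2 * (\<Sum>j\<in>S. (cmod (x j))\<^sup>2))"

definition push_op :: "('i \<Rightarrow> 'j) \<Rightarrow> ('j \<Rightarrow> 'j \<Rightarrow> complex) \<Rightarrow> ('i \<Rightarrow> 'i \<Rightarrow> complex)" where
  "push_op a T = (\<lambda>i1 i2. T (a i1) (a i2))"

definition free_ultrafilter_nat :: "nat filter \<Rightarrow> bool" where
  "free_ultrafilter_nat p \<longleftrightarrow>
     p \<noteq> bot \<and>
     (\<forall>A. eventually (\<lambda>n. n \<in> A) p \<or> eventually (\<lambda>n. n \<notin> A) p) \<and>
     p \<le> cofinite"

definition plim :: "nat filter \<Rightarrow> (nat \<Rightarrow> complex) \<Rightarrow> complex" where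
  "plim p x = Lim p x"

definition ultra_measure :: "(nat \<Rightarrow> 'j set) \<Rightarrow> ('j \<Rightarrow> 'j \<Rightarrow> complex) \<Rightarrow> nat filter \<Rightarrow> complex" where
  "ultra_measure Js T p = plim p (\<lambda>n. (\<Sum>j\<in>Js n. T j j) / of_nat (card (Js n)))"

end

theory Submission
  imports Defs
begin

lemma ultra_lim_exists:
  fixes x :: "nat \<Rightarrow> complex"
  assumes p: "free_ultrafilter_nat p" and B: "\<And>n. norm (x n) \<le> B"
  shows "\<exists>L. (x \<longlongrightarrow> L) p"
proof -
  define F where "F = filtermap x p"
  have pb: "p \<noteq> bot" and uf: "\<And>A. eventually (\<lambda>n. n \<in> A) p \<or> eventually (\<lambda>n. n \<notin> A) p"
    using p unfolding free_ultrafilter_nat_def by auto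
  have Fb: "F \<noteq> bot" using pb by (simp add: F_def filtermap_bot_iff)
  have ev: "eventually (\<lambda>z. z \<in> cball 0 B) F"
    unfolding F_def eventually_filtermap using B by (simp add: dist_norm)
  obtain L where L: "inf (nhds L) F \<noteq> bot"
    using compact_filter[THEN iffD1, OF compact_cball, rule_format, OF Fb ev] by blast
  have "(x \<longlongrightarrow> L) p"
    unfolding tendsto_def
  proof (intro allI impI)
    fix S :: "complex set" assume S: "open S" "L \<in> S"
    show "eventually (\<lambda>n. x n \<in> S) p"
    proof (rule ccontr)
      assume "\<not> eventually (\<lambda>n. x n \<in> S) p"
      then have "eventually (\<lambda>n. n \<notin> x -` S) p" using uf[of "x -` S"] by auto
      then have e1: "eventually (\<lambda>z. z \<notin> S) F" unfolding F_def eventually_filtermap by simp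
      have e2: "eventually (\<lambda>z. z \<in> S) (nhds L)" using S eventually_nhds by blast
      have "eventually (\<lambda>_. False) (inf (nhds L) F)"
        unfolding eventually_inf using e1 e2 by blast
      then show False using L by (simp add: eventually_False)
    qed
  qed
  then show ?thesis by blast
qed

lemma plim_eq:
  fixes x y :: "nat \<Rightarrow> complex"
  assumes p: "free_ultrafilter_nat p" and B: "\<And>n. norm (x n) \<le> B"
    and d: "(\<lambda>n. x n - y n) \<longlonglongrightarrow> 0"
  shows "plim p x = plim p y"
proof -
  have pb: "p \<noteq> bot" and pc: "p \<le> sequentially"
    using p unfolding free_ultrafilter_nat_def by (auto simp: cofinite_eq_sequentially)
  obtain L where L: "(x \<longlongrightarrow> L) p" using ultra_lim_exists[of p x B, OF p B] by blast
  have d': "((\<lambda>n. x n - y n) \<longlongrightarrow> 0) p" using tendsto_mono[OF pc d] .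
  have "((\<lambda>n. x n - (x n - y n)) \<longlongrightarrow> L - 0) p" using tendsto_diff[OF L d'] .
  then have "(y \<longlongrightarrow> L) p" by simp
  then show ?thesis unfolding plim_def using L tendsto_Lim[OF pb] by metis
qed

theorem proposition8p1:
  fixes I :: "'i set" and J :: "'j set"
    and Is :: "nat \<Rightarrow> 'i set" and Js :: "nat \<Rightarrow> 'j set"
    and a :: "'i \<Rightarrow> 'j"
  assumes "countable I" and "countable J"
    and "\<And>n. finite (Is n)" and "\<And>n. Is n \<subseteq> Is (Suc n)" and "(\<Union>n. Is n) = I"
    and "\<And>n. finite (Js n)" and "\<And>n. Js n \<subseteq> Js (Suc n)" and "(\<Union>n. Js n) = J"
    and "bij_betw a I J"
    and "(\<lambda>n. real (card (a ` Is n \<inter> Js n)) / real (card (Is n))) \<longlonglongrightarrow> 1"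
    and "(\<lambda>n. real (card (Js n)) / real (card (Is n))) \<longlonglongrightarrow> 1"
  shows "\<forall>T p. bounded_op_matrix J T \<and> free_ultrafilter_nat p \<longrightarrow>
           plim p (\<lambda>n. (\<Sum>j\<in>Js n. T j j) / of_nat (card (Js n)))
         = plim p (\<lambda>n. (\<Sum>i\<in>Is n. T (a i) (a i)) / of_nat (card (Is n)))
         \<and> ultra_measure Js T p = ultra_measure Is (push_op a T) p"
proof (intro allI impI)
  fix T p assume H: "bounded_op_matrix J T \<and> free_ultrafilter_nat p"
  then have p: "free_ultrafilter_nat p" by blast
  from H have bo: "bounded_op_matrix J T" by blast
  then obtain C :: real where C: "\<forall>x::'j \<Rightarrow> complex. \<forall>S K.
        finite S \<and> S \<subseteq> J \<and> finite K \<and> K \<subseteq> J \<and> (\<forall>j. j \<notin> S \<longrightarrow> x j = 0) \<longrightarrow>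
        (\<Sum>k\<in>K. (cmod (\<Sum>j\<in>S. T j k * x j))\<^sup>2) \<le> C\<^sup>2 * (\<Sum>j\<in>S. (cmod (x j))\<^sup>2)"
    unfolding bounded_op_matrix_def by blast
  define M where "M = \<bar>C\<bar>"
  have M0: "M \<ge> 0" by (simp add: M_def)
  define f where "f j = T j j" for j
  have fM: "cmod (f j) \<le> M" if "j \<in> J" for j
  proof -
    have "(\<Sum>k\<in>{j}. (cmod (\<Sum>j'\<in>{j}. T j' k * (if j' = j then 1 else 0)))\<^sup>2)
        \<le> C\<^sup>2 * (\<Sum>j'\<in>{j}. (cmod (if j' = j then 1 else 0::complex))\<^sup>2)"
      using C that by (intro C[rule_format]) auto
    then have "(cmod (T j j * 1))\<^sup>2 \<le> C\<^sup>2 * (cmod 1)\<^sup>2" by simp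
    then have "(cmod (f j))\<^sup>2 \<le> M\<^sup>2" by (simp add: f_def M_def)
    then show ?thesis using M0 power2_le_imp_le by blast
  qed
  have JsJ: "Js n \<subseteq> J" for n using assms(8) by blast
  have IsI: "Is n \<subseteq> I" for n using assms(5) by blast
  have inj: "inj_on a (Is n)" for n
    using assms(9) IsI unfolding bij_betw_def by (meson inj_on_subset)
  have aIJ: "a ` Is n \<subseteq> J" for n using assms(9) IsI unfolding bij_betw_def by blast
  define x where "x n = (\<Sum>j\<in>Js n. f j) / of_nat (card (Js n))" for n
  define y where "y n = (\<Sum>i\<in>Is n. f (a i)) / of_nat (card (Is n))" for n
  define u where "u n = (\<Sum>j\<in>Js n. f j) / of_nat (card (Is n))" for n
  define r where "r n = real (card (Js n)) / real (card (Is n))" for n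
  define s where "s n = real (card (a ` Is n \<inter> Js n)) / real (card (Is n))" for n
  have sumb: "cmod (\<Sum>j\<in>Js n. f j) \<le> real (card (Js n)) * M" for n
  proof -
    have "cmod (\<Sum>j\<in>Js n. f j) \<le> (\<Sum>j\<in>Js n. cmod (f j))" by (rule norm_sum)
    also have "\<dots> \<le> (\<Sum>j\<in>Js n. M)" using fM JsJ by (intro sum_mono) blast
    finally show ?thesis by simp
  qed
  have xB: "norm (x n) \<le> M" for n
  proof (cases "card (Js n) = 0")
    case True then show ?thesis using M0 by (simp add: x_def)
  next
    case False
    then have "norm (x n) = cmod (\<Sum>j\<in>Js n. f j) / real (card (Js n))"
      by (simp add: x_def norm_divide)
    also have "\<dots> \<le> M" using sumb[of n] False by (simp add: divide_le_eq mult.commute)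
    finally show ?thesis .
  qed
  have xu: "x n - u n = x n * of_real (1 - r n)" for n
  proof (cases "card (Js n) = 0")
    case True
    then have "Js n = {}" using assms(6) by auto
    then show ?thesis by (simp add: x_def u_def)
  next
    case False
    then show ?thesis by (simp add: x_def u_def r_def field_simps)
  qed
  have t1: "(\<lambda>n. x n - u n) \<longlonglongrightarrow> 0"
  proof (rule Lim_null_comparison)
    show "\<forall>\<^sub>F n in sequentially. norm (x n - u n) \<le> M * \<bar>1 - r n\<bar>"
    proof (intro always_eventually allI)
      fix n
      have "norm (x n - u n) = norm (x n) * \<bar>1 - r n\<bar>" unfolding xu norm_mult norm_of_real ..
      also have "\<dots> \<le> M * \<bar>1 - r n\<bar>" by (rule mult_right_mono[OF xB]) simp
      finally show "norm (x n - u n) \<le> M * \<bar>1 - r n\<bar>" .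
    qed
    have "(\<lambda>n. M * \<bar>1 - r n\<bar>) \<longlonglongrightarrow> M * \<bar>1 - 1\<bar>"
      using assms(11) unfolding r_def by (intro tendsto_intros)
    then show "(\<lambda>n. M * \<bar>1 - r n\<bar>) \<longlonglongrightarrow> 0" by simp
  qed
  have keyb: "cmod ((\<Sum>j\<in>Js n. f j) - (\<Sum>i\<in>Is n. f (a i)))
      \<le> M * (real (card (Js n)) + real (card (Is n)) - 2 * real (card (a ` Is n \<inter> Js n)))" for n
  proof -
    define A where "A = a ` Is n \<inter> Js n"
    have fA: "finite (a ` Is n)" using assms(3) by simp
    have fJ: "finite (Js n)" using assms(6) by simp
    have s1: "(\<Sum>j\<in>Js n. f j) = (\<Sum>j\<in>A. f j) + (\<Sum>j\<in>Js n - A. f j)"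
      using fJ by (metis A_def Int_lower2 add.commute sum.subset_diff)
    have s2: "(\<Sum>i\<in>Is n. f (a i)) = (\<Sum>j\<in>a ` Is n. f j)"
      using sum.reindex[OF inj[of n], of f] by simp
    have s3: "(\<Sum>j\<in>a ` Is n. f j) = (\<Sum>j\<in>A. f j) + (\<Sum>j\<in>a ` Is n - A. f j)"
      using fA by (metis A_def Int_lower1 add.commute sum.subset_diff)
    have b1: "cmod (\<Sum>j\<in>Js n - A. f j) \<le> real (card (Js n - A)) * M"
    proof -
      have "cmod (\<Sum>j\<in>Js n - A. f j) \<le> (\<Sum>j\<in>Js n - A. cmod (f j))" by (rule norm_sum)
      also have "\<dots> \<le> (\<Sum>j\<in>Js n - A. M)" using fM JsJ by (intro sum_mono) blast
      finally show ?thesis by simp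
    qed
    have b2: "cmod (\<Sum>j\<in>a ` Is n - A. f j) \<le> real (card (a ` Is n - A)) * M"
    proof -
      have "cmod (\<Sum>j\<in>a ` Is n - A. f j) \<le> (\<Sum>j\<in>a ` Is n - A. cmod (f j))" by (rule norm_sum)
      also have "\<dots> \<le> (\<Sum>j\<in>a ` Is n - A. M)" using fM aIJ by (intro sum_mono) blast
      finally show ?thesis by simp
    qed
    have AJ: "A \<subseteq> Js n" and AI: "A \<subseteq> a ` Is n" by (auto simp: A_def)
    have fAA: "finite A" using fJ AJ finite_subset by blast
    have c1: "real (card (Js n - A)) = real (card (Js n)) - real (card A)"
    proof -
      have "card (Js n - A) = card (Js n) - card A" using card_Diff_subset[OF fAA AJ] .
      moreover have "card A \<le> card (Js n)" using card_mono[OF fJ AJ] .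
      ultimately show ?thesis by (simp add: of_nat_diff)
    qed
    have c2: "real (card (a ` Is n - A)) = real (card (Is n)) - real (card A)"
    proof -
      have "card (a ` Is n - A) = card (a ` Is n) - card A" using card_Diff_subset[OF fAA AI] .
      moreover have "card A \<le> card (a ` Is n)" using card_mono[OF fA AI] .
      moreover have "card (a ` Is n) = card (Is n)" using card_image[OF inj[of n]] .
      ultimately show ?thesis by (simp add: of_nat_diff)
    qed
    have "cmod ((\<Sum>j\<in>Js n. f j) - (\<Sum>i\<in>Is n. f (a i)))
        = cmod ((\<Sum>j\<in>Js n - A. f j) - (\<Sum>j\<in>a ` Is n - A. f j))"
      by (metis s1 s2 s3 add_diff_cancel_left)
    also have "\<dots> \<le> cmod (\<Sum>j\<in>Js n - A. f j) + cmod (\<Sum>j\<in>a ` Is n - A. f j)"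
      by (rule norm_triangle_ineq4)
    also have "\<dots> \<le> real (card (Js n - A)) * M + real (card (a ` Is n - A)) * M"
      using b1 b2 by linarith
    finally have "cmod ((\<Sum>j\<in>Js n. f j) - (\<Sum>i\<in>Is n. f (a i)))
        \<le> real (card (Js n - A)) * M + real (card (a ` Is n - A)) * M" .
    moreover have "real (card (Js n - A)) * M + real (card (a ` Is n - A)) * M
        = M * (real (card (Js n)) + real (card (Is n)) - 2 * real (card A))"
      unfolding c1 c2 by (simp add: algebra_simps)
    moreover have eqA: "a ` Is n \<inter> Js n = A" by (simp add: A_def)
    ultimately show ?thesis unfolding eqA by linarith
  qed
  have t2: "(\<lambda>n. u n - y n) \<longlonglongrightarrow> 0"
  proof (rule Lim_null_comparison)
    show "\<forall>\<^sub>F n in sequentially. norm (u n - y n) \<le> M * (r n + 1 - 2 * s n)"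
    proof (intro always_eventually allI)
      fix n
      show "norm (u n - y n) \<le> M * (r n + 1 - 2 * s n)"
      proof (cases "card (Is n) = 0")
        case True then show ?thesis using M0 by (simp add: u_def y_def r_def s_def)
      next
        case False
        have uy: "u n - y n = ((\<Sum>j\<in>Js n. f j) - (\<Sum>i\<in>Is n. f (a i))) / of_nat (card (Is n))"
          unfolding u_def y_def by (rule diff_divide_distrib[symmetric])
        have "norm (u n - y n) = cmod ((\<Sum>j\<in>Js n. f j) - (\<Sum>i\<in>Is n. f (a i))) / real (card (Is n))"
          unfolding uy norm_divide by simp
        also have "\<dots> \<le> M * (real (card (Js n)) + real (card (Is n)) - 2 * real (card (a ` Is n \<inter> Js n))) / real (card (Is n))"
          by (rule divide_right_mono[OF keyb]) simp
        also have "\<dots> = M * ((real (card (Js n)) + real (card (Is n)) - 2 * real (card (a ` Is n \<inter> Js n))) / real (card (Is n)))"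
          by simp
        also have "(real (card (Js n)) + real (card (Is n)) - 2 * real (card (a ` Is n \<inter> Js n))) / real (card (Is n)) = r n + 1 - 2 * s n"
          using False by (simp add: r_def s_def add_divide_distrib diff_divide_distrib)
        finally show ?thesis .
      qed
    qed
    have "(\<lambda>n. M * (r n + 1 - 2 * s n)) \<longlonglongrightarrow> M * (1 + 1 - 2 * 1)"
      using assms(10,11) unfolding r_def s_def by (intro tendsto_intros)
    then show "(\<lambda>n. M * (r n + 1 - 2 * s n)) \<longlonglongrightarrow> 0" by simp
  qed
  have "(\<lambda>n. (x n - u n) + (u n - y n)) \<longlonglongrightarrow> 0 + 0" using tendsto_add[OF t1 t2] .
  then have d: "(\<lambda>n. x n - y n) \<longlonglongrightarrow> 0" by simp
  have eq: "plim p x = plim p y" using plim_eq[of p x M y, OF p xB d] .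
  show "plim p (\<lambda>n. (\<Sum>j\<in>Js n. T j j) / of_nat (card (Js n)))
         = plim p (\<lambda>n. (\<Sum>i\<in>Is n. T (a i) (a i)) / of_nat (card (Is n)))
         \<and> ultra_measure Js T p = ultra_measure Is (push_op a T) p"
    using eq unfolding ultra_measure_def push_op_def x_def y_def f_def by simp
qed

end
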